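(* With the notation of the context, the constrained Hamiltonian vector field satisfies, at every point of $\mathcal M\times\mathbb R$, $$T\gamma\big({X_H}|_{\mathcal M\times\mathbb R}\big)=X_{H,\mathcal M}=T\gamma\big({X_{H\circ\gamma}}|_{\mathcal M\times\mathbb R}\big).$$
   Context: Let $Q$ be a smooth $n$-manifold and $\pi:T^*Q\times\mathbb R\to Q$ the projection. On $T^*Q\times\mathbb R$ with canonical coordinates $(q^i,p_i,z)$ consider the contact form $\eta=dz-p_i\,dq^i$ with Reeb vector field $\mathcal R=\partial/\partial z$, the isomorphism $\flat:T(T^*Q\times\mathbb R)\to T^*(T^*Q\times\mathbb R)$, $\flat(v)=i_v\,d\eta+\eta(v)\eta$, and $\sharp=\flat^{-1}$. For a function $F$, the contact Hamiltonian vector field $X_F$ is defined by $\flat(X_F)=dF-(\mathcal R(F)+F)\eta$. Let $g$ be a Riemannian metric on $Q$ (inverse $g^{ij}$), $\flat_g:TQ\to T^*Q$ its musical isomorphism, $V\in C^\infty(Q\times\mathbb R)$, $H(q,p,z)=\tfrac12 g^{ij}(q)p_ip_j+V(q,z)$. Let $\mathcal D\subseteq TQ$ be a constant-rank distribution, $\mathcal D^\circ$ its annihilator (locally spanned by 1-forms $\Phi^a_i\,dq^i$), $\mathcal M=\flat_g(\mathcal D)$, so $T^*Q=\mathcal M\oplus\mathcal D^\circ$ fiberwise. Let $\gamma:T^*Q\times\mathbb R\to\mathcal M\times\mathbb R$, $\gamma(\alpha_q,z)=(P_q\alpha_q,z)$ with $P_q$ the projection of $T^*_qQ$ onto $\mathcal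 M_q$ along $\mathcal D^\circ_q$. The constrained Hamiltonian vector field $X_{H,\mathcal M}$ is the (unique) vector field on $\mathcal M\times\mathbb R$, tangent to $\mathcal M\times\mathbb R$, such that at every point of $\mathcal M\times\mathbb R$ $$\flat(X_{H,\mathcal M})-dH+(H+\mathcal R(H))\eta\in\pi^*(\mathcal D^\circ);$$ in coordinates its integral curves satisfy $\dot q^i=\partial H/\partial p_i$, $\dot p_i=-\partial H/\partial q^i-p_i\,\partial H/\partial z-\lambda_a\Phi^a_i$, $\dot z=p_i\,\partial H/\partial p_i-H$, with the curve staying in $\mathcal M\times\mathbb R$. *)

theory Defs
  imports "HOL-Analysis.Analysis"
begin

(* Local coordinates: Q is an open set U of real^('n::finite) (a chart).
   A point of T*Q x R is (q, p, z); tangent vectors are triples (dq, dp, dz)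
   in the same coordinates; 1-forms are real-valued linear functionals on them. *)
type_synonym 'n pt = "(real^'n) \<times> (real^'n) \<times> real"

fun dd :: "('a::real_normed_vector \<Rightarrow> 'b::real_normed_vector) \<Rightarrow> 'a list \<Rightarrow> 'a \<Rightarrow> 'b" where
  "dd f [] = f"
| "dd f (v # vs) = (\<lambda>x. frechet_derivative (dd f vs) (at x) v)"

definition smooth_on :: "'a::real_normed_vector set \<Rightarrow> ('a \<Rightarrow> 'b::real_normed_vector) \<Rightarrow> bool" where
  "smooth_on S f \<longleftrightarrow> (\<forall>vs. \<forall>x\<in>S. dd f vs differentiable (at x))"

(* contact form eta = dz - p_i dq^i at the point x, applied to v *)
definition eta :: "('n::finite) pt \<Rightarrow> ('n::finite) pt \<Rightarrow> real" where
  "eta x v = snd (snd v) - fst (snd x) \<bullet> fst v"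

definition deta :: "('n::finite) pt \<Rightarrow> ('n::finite) pt \<Rightarrow> real" where
  "deta v w = fst v \<bullet> fst (snd w) - fst (snd v) \<bullet> fst w"

definition cflat :: "('n::finite) pt \<Rightarrow> ('n::finite) pt \<Rightarrow> ('n::finite) pt \<Rightarrow> real" where
  "cflat x v = (\<lambda>w. deta v w + eta x v * eta x w)"

definition reeb :: "('n::finite) pt" where
  "reeb = (0, 0, 1)"

definition XH :: "(('n::finite) pt \<Rightarrow> real) \<Rightarrow> ('n::finite) pt \<Rightarrow> ('n::finite) pt" where
  "XH F x = (THE v. cflat x v =
      (\<lambda>w. frechet_derivative F (at x) w
            - (frechet_derivative F (at x) reeb + F x) * eta x w))"

(* the distribution D, given by its annihilating 1-forms Phi^a, a < m *)
definition Dist :: "(nat \<Rightarrow> real^('n::finite) \<Rightarrow> real^('n::finite)) \<Rightarrow> nat \<Rightarrow> real^('n::finite) \<Rightarrow> (real^('n::finite)) set" where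
  "Dist \<Phi> m q = {v. \<forall>a<m. \<Phi> a q \<bullet> v = 0}"

definition Dann :: "(real^('n::finite) \<Rightarrow> (real^('n::finite)) set) \<Rightarrow> real^('n::finite) \<Rightarrow> (real^('n::finite)) set" where
  "Dann D q = {\<alpha>. \<forall>u\<in>D q. \<alpha> \<bullet> u = 0}"

definition Mfib :: "(real^('n::finite) \<Rightarrow> real^('n::finite)^'n) \<Rightarrow> (real^('n::finite) \<Rightarrow> (real^('n::finite)) set) \<Rightarrow> real^('n::finite) \<Rightarrow> (real^('n::finite)) set" where
  "Mfib g D q = (\<lambda>v. g q *v v) ` D q"

definition Pproj :: "(real^('n::finite) \<Rightarrow> real^('n::finite)^'n) \<Rightarrow> (real^('n::finite) \<Rightarrow> (real^('n::finite)) set) \<Rightarrow> real^('n::finite) \<Rightarrow> real^('n::finite) \<Rightarrow> real^('n::finite)" where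
  "Pproj g D q \<alpha> = (THE \<beta>. \<beta> \<in> Mfib g D q \<and> \<alpha> - \<beta> \<in> Dann D q)"

definition gam :: "(real^('n::finite) \<Rightarrow> real^('n::finite)^'n) \<Rightarrow> (real^('n::finite) \<Rightarrow> (real^('n::finite)) set) \<Rightarrow> ('n::finite) pt \<Rightarrow> ('n::finite) pt" where
  "gam g D x = (fst x, Pproj g D (fst x) (fst (snd x)), snd (snd x))"

definition MR :: "(real^('n::finite)) set \<Rightarrow> (real^('n::finite) \<Rightarrow> real^('n::finite)^'n) \<Rightarrow> (real^('n::finite) \<Rightarrow> (real^('n::finite)) set) \<Rightarrow> (('n::finite) pt) set" where
  "MR U g D = {x. fst x \<in> U \<and> fst (snd x) \<in> Mfib g D (fst x)}"

definition tspace :: "('a::real_normed_vector) set \<Rightarrow> 'a \<Rightarrow> 'a set" where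
  "tspace S x = {v. \<exists>c e. e > 0 \<and> c 0 = x \<and> (\<forall>t. \<bar>t\<bar> < e \<longrightarrow> c t \<in> S)
                      \<and> (c has_vector_derivative v) (at 0)}"

definition XHM :: "(real^('n::finite)) set \<Rightarrow> (real^('n::finite) \<Rightarrow> real^('n::finite)^'n) \<Rightarrow> (real^('n::finite) \<Rightarrow> (real^('n::finite)) set)
                   \<Rightarrow> (('n::finite) pt \<Rightarrow> real) \<Rightarrow> ('n::finite) pt \<Rightarrow> ('n::finite) pt" where
  "XHM U g D H x = (THE v. v \<in> tspace (MR U g D) x \<and>
      (\<exists>\<alpha>\<in>Dann D (fst x).
         (\<lambda>w. cflat x v w - frechet_derivative H (at x) w
               + (H x + frechet_derivative H (at x) reeb) * eta x w)
       = (\<lambda>w. \<alpha> \<bullet> fst w)))"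

definition Ham :: "(real^('n::finite) \<Rightarrow> real^('n::finite)^'n) \<Rightarrow> (real^('n::finite) \<Rightarrow> real \<Rightarrow> real) \<Rightarrow> ('n::finite) pt \<Rightarrow> real" where
  "Ham g V x = (1/2) * (fst (snd x) \<bullet> (matrix_inv (g (fst x)) *v fst (snd x)))
               + V (fst x) (snd (snd x))"

end

theory Submission
  imports Defs
begin


lemma diff_nth:
  fixes f :: "'a::real_normed_vector \<Rightarrow> 'b::real_normed_vector^'n"
  assumes "f differentiable (at y0)"
  shows "(\<lambda>y. f y $ i) differentiable (at y0)"
  using assms unfolding differentiable_def
  using bounded_linear.has_derivative[OF bounded_linear_vec_nth] by blast

lemma diff_vec:
  fixes f :: "'a::real_normed_vector \<Rightarrow> 'b::euclidean_space^'n"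
  assumes "\<And>i. (\<lambda>y. f y $ i) differentiable (at y0)"
  shows "f differentiable (at y0)"
proof -
  have "(\<lambda>y. f y $ i \<bullet> u) differentiable (at y0)" for i u
    using assms[of i] bounded_linear.has_derivative[OF bounded_linear_inner_left[of u]]
    unfolding differentiable_def by blast
  then show ?thesis
    unfolding differentiable_componentwise_within[of f]
    by (auto simp: Basis_vec_def inner_axis)
qed

lemma diff_prod:
  fixes f :: "'i \<Rightarrow> 'a::real_normed_vector \<Rightarrow> real"
  assumes "\<And>i. i \<in> I \<Longrightarrow> f i differentiable (at y0)"
  shows "(\<lambda>y. \<Prod>i\<in>I. f i y) differentiable (at y0)"
proof -
  from assms obtain f' where "\<And>i. i \<in> I \<Longrightarrow> (f i has_derivative f' i) (at y0)"
    unfolding differentiable_def by metis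
  then show ?thesis unfolding differentiable_def
    using has_derivative_prod by blast
qed

lemma diff_det:
  fixes A :: "'a::real_normed_vector \<Rightarrow> real^'n^'n"
  assumes "\<And>i j. (\<lambda>y. A y $ i $ j) differentiable (at y0)"
  shows "(\<lambda>y. det (A y)) differentiable (at y0)"
  unfolding det_def
  by (intro differentiable_sum ballI differentiable_mult differentiable_const diff_prod assms)
     (simp add: finite_permutations)

lemma diff_mat:
  fixes A :: "'a::real_normed_vector \<Rightarrow> real^'n^'m"
  assumes "\<And>i j. (\<lambda>y. A y $ i $ j) differentiable (at y0)"
  shows "A differentiable (at y0)"
  by (intro diff_vec assms)

lemma minv_cramer:
  fixes B :: "real^'n^'n"
  assumes "det B \<noteq> 0"
  shows "matrix_inv B = (\<chi> i j. det (\<chi> r s. if s = i then axis j 1 $ r else B$r$s) / det B)"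
proof -
  have inv: "invertible B" using assms invertible_det_nz by blast
  then have BB: "B ** matrix_inv B = mat 1" "matrix_inv B ** B = mat 1"
    unfolding invertible_def matrix_inv_def by (metis (mono_tags, lifting) someI_ex)+
  show ?thesis
    unfolding vec_eq_iff
  proof (intro allI)
    fix i j
    have "B *v (matrix_inv B *v axis j 1) = axis j 1"
      by (simp add: matrix_vector_mul_assoc BB)
    then have "matrix_inv B *v axis j 1 = (\<chi> k. det(\<chi> r s. if s=k then (axis j 1)$r else B$r$s) / det B)"
      using cramer[OF assms] by blast
    then have "(matrix_inv B *v axis j 1) $ i = det(\<chi> r s. if s=i then (axis j 1)$r else B$r$s) / det B"
      by simp
    moreover have "(matrix_inv B *v axis j 1) $ i = matrix_inv B $ i $ j"
      by (simp add: matrix_vector_mult_basis column_def)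
    ultimately show "matrix_inv B $ i $ j = (\<chi> i j. det (\<chi> r s. if s = i then axis j 1 $ r else B$r$s) / det B) $ i $ j"
      by simp
  qed
qed

lemma diff_minv:
  fixes A :: "'a::real_normed_vector \<Rightarrow> real^'n^'n"
  assumes A: "A differentiable (at y0)" and d: "det (A y0) \<noteq> 0"
  shows "(\<lambda>y. matrix_inv (A y)) differentiable (at y0)"
proof -
  have Aij: "(\<lambda>y. A y $ i $ j) differentiable (at y0)" for i j
    by (intro diff_nth A)
  have ddet: "(\<lambda>y. det (A y)) differentiable (at y0)"
    by (intro diff_det Aij)
  define C where "C y = (\<chi> i j. det (\<chi> r s. if s = i then axis j 1 $ r else A y$r$s) / det (A y))" for y
  have "C differentiable (at y0)"
    unfolding C_def
    apply (intro diff_mat, simp, intro differentiable_divide ddet d diff_det)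
    subgoal for i j r s by (cases "s = i") (simp_all add: Aij)
    done
  moreover have "\<forall>\<^sub>F y in at y0. det (A y) \<noteq> 0"
  proof -
    have "isCont (\<lambda>y. det (A y)) y0"
      using ddet differentiable_imp_continuous_within continuous_at by blast
    then show ?thesis using d
      by (metis continuous_at tendsto_imp_eventually_ne)
  qed
  then have "\<forall>\<^sub>F y in at y0. C y = matrix_inv (A y)"
    by eventually_elim (simp add: C_def minv_cramer)
  moreover have "C y0 = matrix_inv (A y0)" by (simp add: C_def minv_cramer d)
  moreover obtain D where "(C has_derivative D) (at y0)"
    using \<open>C differentiable (at y0)\<close> unfolding differentiable_def by blast
  ultimately have "((\<lambda>y. matrix_inv (A y)) has_derivative D) (at y0)"
    using has_derivative_transform_eventually[of C D y0 UNIV "\<lambda>y. matrix_inv (A y)"] by auto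
  then show ?thesis unfolding differentiable_def by blast
qed




definition ip :: "real^'n^'n \<Rightarrow> real^'n \<Rightarrow> real^'n \<Rightarrow> real" where
  "ip K a b = a \<bullet> (K *v b)"

fun PJ :: "real^'n^'n \<Rightarrow> (nat \<Rightarrow> real^'n) \<Rightarrow> nat \<Rightarrow> real^'n \<Rightarrow> real^'n" where
  "PJ K F 0 a = 0"
| "PJ K F (Suc k) a = PJ K F k a
     + (ip K a (F k - PJ K F k (F k)) / ip K (F k - PJ K F k (F k)) (F k - PJ K F k (F k)))
        *\<^sub>R (F k - PJ K F k (F k))"

lemma ip_diff_left: "ip K (a - b) c = ip K a c - ip K b c"
  by (simp add: ip_def inner_diff_left)
lemma ip_add_left: "ip K (a + b) c = ip K a c + ip K b c"
  by (simp add: ip_def inner_add_left)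
lemma ip_scale_left: "ip K (r *\<^sub>R a) c = r * ip K a c"
  by (simp add: ip_def)
lemma ip_diff_right: "ip K a (b - c) = ip K a b - ip K a c"
  by (simp add: ip_def inner_diff_right matrix_vector_mult_diff_distrib)
lemma ip_add_right: "ip K a (b + c) = ip K a b + ip K a c"
  by (simp add: ip_def inner_add_right matrix_vector_right_distrib)
lemma ip_scale_right: "ip K a (r *\<^sub>R c) = r * ip K a c"
  by (simp add: ip_def matrix_vector_mult_scaleR)

lemma ip_sym: "transpose K = K \<Longrightarrow> ip K a b = ip K b a"
  unfolding ip_def
  by (metis dot_lmul_matrix inner_commute transpose_matrix_vector)

lemma ip_span_zero:
  assumes "\<And>y. y \<in> S \<Longrightarrow> ip K b y = 0" "x \<in> span S"
  shows "ip K b x = 0"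
  using assms(2)
proof (induction rule: span_induct_alt)
  case base
  then show ?case by (simp add: ip_def)
next
  case (step c x y)
  then show ?case using assms(1)[of x] by (simp add: ip_add_right ip_scale_right)
qed

lemma PJ_props:
  assumes sym: "transpose K = K"
    and pos: "\<And>v. v \<noteq> 0 \<Longrightarrow> ip K v v > 0"
    and ind: "\<And>k. k < m \<Longrightarrow> F k \<notin> span (F ` {..<k})"
  shows "k \<le> m \<Longrightarrow> PJ K F k a \<in> span (F ` {..<k}) \<and> (\<forall>j<k. ip K (a - PJ K F k a) (F j) = 0)"
proof (induction k arbitrary: a)
  case 0
  then show ?case by simp
next
  case (Suc k)
  define f where "f = F k - PJ K F k (F k)"
  define c where "c = ip K a f / ip K f f"
  have km: "k \<le> m" "k < m" using Suc.prems by auto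
  have IHa: "PJ K F k a \<in> span (F ` {..<k})" "\<And>j. j<k \<Longrightarrow> ip K (a - PJ K F k a) (F j) = 0"
    using Suc.IH[OF km(1)] by auto
  have IHf: "PJ K F k (F k) \<in> span (F ` {..<k})" "\<And>j. j<k \<Longrightarrow> ip K f (F j) = 0"
    using Suc.IH[OF km(1), of "F k"] by (auto simp: f_def)
  have sub: "span (F ` {..<k}) \<subseteq> span (F ` {..<Suc k})"
    by (intro span_mono) auto
  have Fk: "F k \<in> span (F ` {..<Suc k})" by (intro span_base) auto
  have fspan: "f \<in> span (F ` {..<Suc k})"
    unfolding f_def using Fk IHf(1) sub by (blast intro: span_diff)
  have fnz: "f \<noteq> 0"
    using ind[OF km(2)] IHf(1) unfolding f_def by auto
  have fpos: "ip K f f > 0" using pos[OF fnz] .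
  have PJS: "PJ K F (Suc k) a = PJ K F k a + c *\<^sub>R f"
    unfolding c_def f_def by simp
  define b where "b = a - PJ K F k a - c *\<^sub>R f"
  have bj: "ip K b (F j) = 0" if "j < k" for j
    using IHa(2)[OF that] IHf(2)[OF that]
    by (simp add: b_def ip_diff_left ip_scale_left)
  have bPJ: "ip K b (PJ K F k (F k)) = 0"
    using ip_span_zero[of "F ` {..<k}" K b, OF _ IHf(1)] bj by auto
  have fPJa: "ip K f (PJ K F k a) = 0"
    using ip_span_zero[of "F ` {..<k}" K f, OF _ IHa(1)] IHf(2) by auto
  have bf: "ip K b f = 0"
    using fPJa fpos ip_sym[OF sym, of f "PJ K F k a"]
    by (simp add: b_def ip_diff_left ip_scale_left c_def)
  have bk: "ip K b (F k) = 0"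
  proof -
    have "F k = f + PJ K F k (F k)" by (simp add: f_def)
    then have "ip K b (F k) = ip K b f + ip K b (PJ K F k (F k))"
      by (metis ip_add_right)
    then show ?thesis using bf bPJ by simp
  qed
  have "PJ K F (Suc k) a \<in> span (F ` {..<Suc k})"
    unfolding PJS using IHa(1) sub fspan by (blast intro: span_add span_scale)
  moreover have "\<forall>j<Suc k. ip K (a - PJ K F (Suc k) a) (F j) = 0"
  proof (intro allI impI)
    fix j assume "j < Suc k"
    then have "j < k \<or> j = k" by auto
    moreover have "a - PJ K F (Suc k) a = b" unfolding PJS b_def by simp
    ultimately show "ip K (a - PJ K F (Suc k) a) (F j) = 0" using bj bk by auto
  qed
  ultimately show ?case by blast
qed

lemma PJ_fpos:
  assumes sym: "transpose K = K"
    and pos: "\<And>v. v \<noteq> 0 \<Longrightarrow> ip K v v > 0"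
    and ind: "\<And>k. k < m \<Longrightarrow> F k \<notin> span (F ` {..<k})"
    and "k < m"
  shows "ip K (F k - PJ K F k (F k)) (F k - PJ K F k (F k)) > 0"
proof -
  have "PJ K F k (F k) \<in> span (F ` {..<k})"
    using PJ_props[OF sym pos ind, of k] assms(4) by auto
  then have "F k - PJ K F k (F k) \<noteq> 0" using ind[OF assms(4)] by auto
  then show ?thesis using pos by blast
qed

lemma ip_differentiable:
  fixes Kf :: "'a::real_normed_vector \<Rightarrow> real^'n^'n"
  assumes "Kf differentiable (at y0)" "a differentiable (at y0)" "b differentiable (at y0)"
  shows "(\<lambda>y. ip (Kf y) (a y) (b y)) differentiable (at y0)"
proof -
  have Kij: "(\<lambda>y. Kf y $ i $ j) differentiable (at y0)" for i j
    by (intro diff_nth assms)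
  have ai: "(\<lambda>y. a y $ i) differentiable (at y0)" "(\<lambda>y. b y $ i) differentiable (at y0)" for i
    by (intro diff_nth assms)+
  show ?thesis
    unfolding ip_def inner_vec_def matrix_vector_mult_def
    by (simp, intro differentiable_sum ballI differentiable_mult Kij ai) simp_all
qed

lemma PJ_differentiable:
  fixes Kf :: "'a::real_normed_vector \<Rightarrow> real^'n^'n"
  assumes K: "Kf differentiable (at y0)"
    and F: "\<And>j. j < k \<Longrightarrow> Ff j differentiable (at y0)"
    and nz: "\<And>j. j < k \<Longrightarrow> ip (Kf y0) (Ff j y0 - PJ (Kf y0) (\<lambda>i. Ff i y0) j (Ff j y0))
                                   (Ff j y0 - PJ (Kf y0) (\<lambda>i. Ff i y0) j (Ff j y0)) \<noteq> 0"
    and A: "A differentiable (at y0)"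
  shows "(\<lambda>y. PJ (Kf y) (\<lambda>i. Ff i y) k (A y)) differentiable (at y0)"
  using F nz A
proof (induction k arbitrary: A)
  case 0
  then show ?case by simp
next
  case (Suc k)
  have Fk: "Ff k differentiable (at y0)" using Suc.prems by auto
  have P1: "(\<lambda>y. PJ (Kf y) (\<lambda>i. Ff i y) k (A y)) differentiable (at y0)"
    using Suc by auto
  have P2: "(\<lambda>y. PJ (Kf y) (\<lambda>i. Ff i y) k (Ff k y)) differentiable (at y0)"
    using Suc.IH[of "Ff k"] Suc.prems Fk by auto
  have f: "(\<lambda>y. Ff k y - PJ (Kf y) (\<lambda>i. Ff i y) k (Ff k y)) differentiable (at y0)"
    using Fk P2 by (rule differentiable_diff)
  show ?case
    apply simp
    apply (intro differentiable_add P1 differentiable_scaleR f differentiable_divide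
        ip_differentiable K Suc.prems(3))
    using Suc.prems(2)[of k] by auto
qed




lemma ginv:
  fixes G :: "real^'n^'n"
  assumes pos: "\<forall>v. v \<noteq> 0 \<longrightarrow> v \<bullet> (G *v v) > 0"
  shows "G ** matrix_inv G = mat 1" "matrix_inv G ** G = mat 1" "det G \<noteq> 0"
proof -
  have "inj ((*v) G)"
  proof (rule injI)
    fix u v assume "G *v u = G *v v"
    then have "G *v (u - v) = 0" by (simp add: matrix_vector_mult_diff_distrib)
    then show "u = v" using pos[rule_format, of "u - v"] by (cases "u = v") auto
  qed
  then show d: "det G \<noteq> 0"
    using det_nz_iff_inj[of "(*v) G"] by (simp add: matrix_vector_mul_linear)
  then have "invertible G" using invertible_det_nz by blast
  then show "G ** matrix_inv G = mat 1" "matrix_inv G ** G = mat 1"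
    unfolding invertible_def matrix_inv_def by (metis (mono_tags, lifting) someI_ex)+
qed

lemma Ksym:
  fixes G :: "real^'n^'n"
  assumes pos: "\<forall>v. v \<noteq> 0 \<longrightarrow> v \<bullet> (G *v v) > 0" and sym: "transpose G = G"
  shows "transpose (matrix_inv G) = matrix_inv G"
proof -
  let ?K = "matrix_inv G"
  have "transpose ?K = transpose ?K ** (G ** ?K)" using ginv[OF pos] by (simp add: matrix_mul_rid)
  also have "\<dots> = (transpose ?K ** transpose G) ** ?K" by (simp add: matrix_mul_assoc sym)
  also have "\<dots> = transpose (G ** ?K) ** ?K" by (simp add: matrix_transpose_mul)
  also have "\<dots> = ?K" using ginv[OF pos] by (simp add: transpose_mat matrix_mul_lid)
  finally show ?thesis .
qed

lemma Kpos:
  fixes G :: "real^'n^'n"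
  assumes pos: "\<forall>v. v \<noteq> 0 \<longrightarrow> v \<bullet> (G *v v) > 0" and "v \<noteq> 0"
  shows "ip (matrix_inv G) v v > 0"
proof -
  let ?u = "matrix_inv G *v v"
  have Gu: "G *v ?u = v" using ginv[OF pos] by (simp add: matrix_vector_mul_assoc)
  then have "?u \<noteq> 0" using assms(2) by auto
  then have "?u \<bullet> (G *v ?u) > 0" using pos by blast
  then show ?thesis unfolding ip_def using Gu by (simp add: inner_commute)
qed

lemma subspace_Dist: "subspace (Dist \<Phi> m q)"
  unfolding subspace_def Dist_def by (auto simp: inner_add_right)

lemma subspace_Dann: "subspace (Dann D q)"
  unfolding subspace_def Dann_def by (auto simp: inner_add_left)

lemma subspace_Mfib: "subspace (Mfib g (Dist \<Phi> m) q)"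
  unfolding Mfib_def
  by (rule linear_subspace_image[OF matrix_vector_mul_linear subspace_Dist])

lemma Phi_Dann: "a < m \<Longrightarrow> \<Phi> a q \<in> Dann (Dist \<Phi> m) q"
  unfolding Dann_def Dist_def by auto

lemma span_Phi_Dann: "span ((\<lambda>a. \<Phi> a q) ` {..<m}) \<subseteq> Dann (Dist \<Phi> m) q"
  by (rule span_minimal) (auto simp: Phi_Dann subspace_Dann)

lemma MD_zero:
  assumes pos: "\<forall>v. v \<noteq> 0 \<longrightarrow> v \<bullet> (g q *v v) > 0"
    and "\<beta> \<in> Mfib g D q" "\<beta> \<in> Dann D q"
  shows "\<beta> = 0"
proof -
  obtain u where u: "u \<in> D q" "\<beta> = g q *v u" using assms(2) unfolding Mfib_def by auto
  have "\<beta> \<bullet> u = 0" using assms(3) u(1) unfolding Dann_def by auto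
  then have "u \<bullet> (g q *v u) = 0" using u(2) by (simp add: inner_commute)
  then have "u = 0" using pos by force
  then show ?thesis using u by simp
qed

lemma Pproj_char:
  assumes pos: "\<forall>v. v \<noteq> 0 \<longrightarrow> v \<bullet> (g q *v v) > 0"
    and "\<beta> \<in> Mfib g (Dist \<Phi> m) q" "\<alpha> - \<beta> \<in> Dann (Dist \<Phi> m) q"
  shows "Pproj g (Dist \<Phi> m) q \<alpha> = \<beta>"
  unfolding Pproj_def
proof (rule the_equality)
  show "\<beta> \<in> Mfib g (Dist \<Phi> m) q \<and> \<alpha> - \<beta> \<in> Dann (Dist \<Phi> m) q" using assms by auto
next
  fix \<beta>' assume b': "\<beta>' \<in> Mfib g (Dist \<Phi> m) q \<and> \<alpha> - \<beta>' \<in> Dann (Dist \<Phi> m) q"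
  have "\<beta>' - \<beta> \<in> Mfib g (Dist \<Phi> m) q"
    using b' assms(2) subspace_Mfib by (blast intro: subspace_diff)
  moreover have "\<beta>' - \<beta> = (\<alpha> - \<beta>) - (\<alpha> - \<beta>')" by simp
  then have "\<beta>' - \<beta> \<in> Dann (Dist \<Phi> m) q"
    using b' assms(3) subspace_Dann by (metis subspace_diff)
  ultimately have "\<beta>' - \<beta> = 0" using MD_zero[of g q, OF pos] by blast
  then show "\<beta>' = \<beta>" by simp
qed

lemma Phi_notin_span:
  fixes \<Phi> :: "nat \<Rightarrow> real^'n \<Rightarrow> real^'n"
  assumes "independent ((\<lambda>a. \<Phi> a q) ` {..<m}) \<and> inj_on (\<lambda>a. \<Phi> a q) {..<m}" "k < m"
  shows "\<Phi> k q \<notin> span ((\<lambda>a. \<Phi> a q) ` {..<k})"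
proof
  let ?S = "(\<lambda>a. \<Phi> a q) ` {..<m}"
  assume "\<Phi> k q \<in> span ((\<lambda>a. \<Phi> a q) ` {..<k})"
  moreover have "(\<lambda>a. \<Phi> a q) ` {..<k} \<subseteq> ?S - {\<Phi> k q}"
  proof
    fix y assume "y \<in> (\<lambda>a. \<Phi> a q) ` {..<k}"
    then obtain j where j: "j < k" "y = \<Phi> j q" by auto
    have jm: "j < m" using j(1) assms(2) by linarith
    have "\<Phi> j q \<noteq> \<Phi> k q"
    proof
      assume "\<Phi> j q = \<Phi> k q"
      then have "j = k" using assms(1) jm assms(2) unfolding inj_on_def by blast
      with j(1) show False by simp
    qed
    then show "y \<in> ?S - {\<Phi> k q}" using j assms(2) by auto
  qed
  ultimately have "\<Phi> k q \<in> span (?S - {\<Phi> k q})" using span_mono by blast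
  then have "dependent ?S" unfolding dependent_def using assms(2) by auto
  then show False using assms(1) by blast
qed

lemma Pproj_formula:
  fixes \<Phi> :: "nat \<Rightarrow> real^'n \<Rightarrow> real^'n"
  assumes pos: "\<forall>v. v \<noteq> 0 \<longrightarrow> v \<bullet> (g q *v v) > 0"
    and sym: "transpose (g q) = g q"
    and ind: "independent ((\<lambda>a. \<Phi> a q) ` {..<m}) \<and> inj_on (\<lambda>a. \<Phi> a q) {..<m}"
  shows "Pproj g (Dist \<Phi> m) q \<alpha> = \<alpha> - PJ (matrix_inv (g q)) (\<lambda>j. \<Phi> j q) m \<alpha>"
    and "\<alpha> - PJ (matrix_inv (g q)) (\<lambda>j. \<Phi> j q) m \<alpha> \<in> Mfib g (Dist \<Phi> m) q"
    and "PJ (matrix_inv (g q)) (\<lambda>j. \<Phi> j q) m \<alpha> \<in> Dann (Dist \<Phi> m) q"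
proof -
  let ?K = "matrix_inv (g q)"
  let ?P = "PJ ?K (\<lambda>j. \<Phi> j q) m \<alpha>"
  have Ks: "transpose ?K = ?K" by (rule Ksym[OF pos sym])
  have props: "?P \<in> span ((\<lambda>a. \<Phi> a q) ` {..<m}) \<and> (\<forall>j<m. ip ?K (\<alpha> - ?P) (\<Phi> j q) = 0)"
    by (rule PJ_props[OF Ks Kpos[OF pos] Phi_notin_span[of \<Phi> q m, OF ind]]) auto
  show D: "?P \<in> Dann (Dist \<Phi> m) q" using props span_Phi_Dann by blast
  have "?K *v (\<alpha> - ?P) \<in> Dist \<Phi> m q"
    unfolding Dist_def
  proof (intro CollectI allI impI)
    fix a assume "a < m"
    then have "ip ?K (\<Phi> a q) (\<alpha> - ?P) = 0" using props ip_sym[OF Ks] by metis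
    then show "\<Phi> a q \<bullet> (?K *v (\<alpha> - ?P)) = 0" by (simp add: ip_def)
  qed
  moreover have "g q *v (?K *v (\<alpha> - ?P)) = \<alpha> - ?P"
    using ginv[OF pos] by (simp add: matrix_vector_mul_assoc)
  ultimately show M: "\<alpha> - ?P \<in> Mfib g (Dist \<Phi> m) q" unfolding Mfib_def by (metis image_eqI)
  show "Pproj g (Dist \<Phi> m) q \<alpha> = \<alpha> - ?P"
    by (rule Pproj_char[OF pos M]) (use D in simp)
qed




lemma line_deriv:
  fixes f :: "'a::real_normed_vector \<Rightarrow> 'b::real_normed_vector"
  assumes f: "(f has_derivative f') (at x)"
    and l: "((\<lambda>t. f (x + t *\<^sub>R d)) has_derivative (\<lambda>t. t *\<^sub>R e)) (at 0)"
  shows "f' d = e"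
proof -
  have ln: "((\<lambda>t::real. x + t *\<^sub>R d) has_derivative (\<lambda>t. t *\<^sub>R d)) (at 0)"
    by (auto intro!: derivative_eq_intros)
  have f0: "(f has_derivative f') (at (x + (0::real) *\<^sub>R d))" using f by simp
  have "((\<lambda>t. f (x + t *\<^sub>R d)) has_derivative (\<lambda>t. f' (t *\<^sub>R d))) (at 0)"
    using has_derivative_compose[OF ln f0] .
  then have "(\<lambda>t. f' (t *\<^sub>R d)) = (\<lambda>t. t *\<^sub>R e)"
    using l has_derivative_unique by blast
  then show ?thesis by (metis scaleR_one)
qed

lemma lin_diff: "bounded_linear f \<Longrightarrow> f differentiable F"
  unfolding differentiable_def using bounded_linear_imp_has_derivative by blast

locale cset =
  fixes U :: "(real^'n) set"
    and g :: "real^'n \<Rightarrow> real^'n^'n"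
    and \<Phi> :: "nat \<Rightarrow> real^'n \<Rightarrow> real^'n"
    and m :: nat
  assumes U_open: "open U"
    and g_smooth: "smooth_on U g"
    and g_sym: "\<forall>q\<in>U. transpose (g q) = g q"
    and g_pos: "\<forall>q\<in>U. \<forall>v. v \<noteq> 0 \<longrightarrow> v \<bullet> (g q *v v) > 0"
    and Phi_smooth: "\<forall>a<m. smooth_on U (\<Phi> a)"
    and Phi_indep: "\<forall>q\<in>U. independent ((\<lambda>a. \<Phi> a q) ` {..<m}) \<and> inj_on (\<lambda>a. \<Phi> a q) {..<m}"
begin

abbreviation "D \<equiv> Dist \<Phi> m"

lemma g_diff: "q \<in> U \<Longrightarrow> g differentiable (at q)"
  using g_smooth unfolding smooth_on_def by (metis dd.simps(1))

lemma Phi_diff: "a < m \<Longrightarrow> q \<in> U \<Longrightarrow> \<Phi> a differentiable (at q)"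
  using Phi_smooth unfolding smooth_on_def by (metis dd.simps(1))

lemma gam_formula:
  assumes "fst y \<in> U"
  shows "gam g D y = (fst y, fst (snd y) - PJ (matrix_inv (g (fst y))) (\<lambda>j. \<Phi> j (fst y)) m (fst (snd y)), snd (snd y))"
  unfolding gam_def using Pproj_formula(1)[of g "fst y" \<Phi> m] assms g_pos g_sym Phi_indep by auto

lemma gam_diff:
  assumes y0: "fst y0 \<in> U"
  shows "gam g D differentiable (at y0)"
proof -
  let ?R = "\<lambda>y::'n pt. (fst y, fst (snd y) - PJ (matrix_inv (g (fst y))) (\<lambda>j. \<Phi> j (fst y)) m (fst (snd y)), snd (snd y))"
  have bl1: "bounded_linear (\<lambda>y::'n pt. fst (snd y))"
    by (intro bounded_linear_compose[OF bounded_linear_fst bounded_linear_snd])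
  have bl2: "bounded_linear (\<lambda>y::'n pt. snd (snd y))"
    by (intro bounded_linear_compose[OF bounded_linear_snd bounded_linear_snd])
  have fd: "(\<lambda>y::'n pt. fst y) differentiable (at y0)" by (rule lin_diff[OF bounded_linear_fst])
  have gd: "(\<lambda>y::'n pt. g (fst y)) differentiable (at y0)"
    by (rule differentiable_compose[OF g_diff[OF y0] fd])
  have pos0: "\<forall>v. v \<noteq> 0 \<longrightarrow> v \<bullet> (g (fst y0) *v v) > 0" using g_pos y0 by auto
  have Kd: "(\<lambda>y::'n pt. matrix_inv (g (fst y))) differentiable (at y0)"
    by (rule diff_minv[OF gd]) (use ginv(3)[OF pos0] in simp)
  have Fd: "(\<lambda>y::'n pt. \<Phi> j (fst y)) differentiable (at y0)" if "j < m" for j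
    by (rule differentiable_compose[OF Phi_diff[OF that y0] fd])
  have Ks: "transpose (matrix_inv (g (fst y0))) = matrix_inv (g (fst y0))"
    using Ksym[OF pos0] g_sym y0 by auto
  have nz: "ip (matrix_inv (g (fst y0))) (\<Phi> j (fst y0) - PJ (matrix_inv (g (fst y0))) (\<lambda>i. \<Phi> i (fst y0)) j (\<Phi> j (fst y0)))
      (\<Phi> j (fst y0) - PJ (matrix_inv (g (fst y0))) (\<lambda>i. \<Phi> i (fst y0)) j (\<Phi> j (fst y0))) \<noteq> 0"
    if "j < m" for j
  proof -
    have ind0: "\<And>k. k < m \<Longrightarrow> \<Phi> k (fst y0) \<notin> span ((\<lambda>a. \<Phi> a (fst y0)) ` {..<k})"
      using Phi_notin_span[of \<Phi> "fst y0" m] Phi_indep y0 by blast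
    show ?thesis using PJ_fpos[OF Ks Kpos[OF pos0] ind0 that] by simp
  qed
  have "?R differentiable (at y0)"
    apply (intro differentiable_Pair fd lin_diff[OF bl2] differentiable_diff lin_diff[OF bl1])
    apply (rule PJ_differentiable[where Kf = "\<lambda>y. matrix_inv (g (fst y))" and Ff = "\<lambda>j y. \<Phi> j (fst y)", OF Kd])
    using Fd nz lin_diff[OF bl1] by auto
  then obtain D' where D': "(?R has_derivative D') (at y0)" unfolding differentiable_def by blast
  have "{y::'n pt. fst y \<in> U} = U \<times> UNIV" by auto
  then have "open {y::'n pt. fst y \<in> U}" using open_Times[OF U_open open_UNIV] by simp
  then have "(gam g D has_derivative D') (at y0)"
    by (rule has_derivative_transform_within_open[OF D']) (use y0 gam_formula in auto)
  then show ?thesis unfolding differentiable_def by blast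
qed

lemma gam_MR:
  assumes "fst y \<in> U"
  shows "gam g D y \<in> MR U g D"
  using Pproj_formula(1,2)[of g "fst y" \<Phi> m "fst (snd y)"] assms g_pos g_sym Phi_indep
  unfolding MR_def gam_def by auto

lemma gam_id:
  assumes "y \<in> MR U g D"
  shows "gam g D y = y"
proof -
  have "Pproj g D (fst y) (fst (snd y)) = fst (snd y)"
    using assms g_pos unfolding MR_def
    by (intro Pproj_char) (auto intro: subspace_0[OF subspace_Dann])
  then show ?thesis unfolding gam_def by simp
qed

lemma P_affine:
  assumes q: "q \<in> U" and p: "p \<in> Mfib g D q"
  shows "Pproj g D q (p + t *\<^sub>R w) = p + t *\<^sub>R Pproj g D q w"
proof -
  have pos: "\<forall>v. v \<noteq> 0 \<longrightarrow> v \<bullet> (g q *v v) > 0" using g_pos q by auto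
  have w1: "Pproj g D q w \<in> Mfib g D q" "w - Pproj g D q w \<in> Dann D q"
    using Pproj_formula[of g q \<Phi> m w] g_pos g_sym Phi_indep q by auto
  show ?thesis
  proof (rule Pproj_char[of g q, OF pos])
    show "p + t *\<^sub>R Pproj g D q w \<in> Mfib g D q"
      using w1 p subspace_Mfib by (metis subspace_add subspace_scale)
    have "p + t *\<^sub>R w - (p + t *\<^sub>R Pproj g D q w) = t *\<^sub>R (w - Pproj g D q w)"
      by (simp add: algebra_simps)
    then show "p + t *\<^sub>R w - (p + t *\<^sub>R Pproj g D q w) \<in> Dann D q"
      using w1 subspace_Dann by (metis subspace_scale)
  qed
qed

lemma P_Dann:
  assumes q: "q \<in> U" and "\<delta> \<in> Dann D q"
  shows "Pproj g D q \<delta> = 0"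
  using assms g_pos
  by (intro Pproj_char) (auto intro: subspace_0[OF subspace_Mfib])

lemma P_zero_Dann:
  assumes q: "q \<in> U" and "Pproj g D q \<delta> = 0"
  shows "\<delta> \<in> Dann D q"
  using Pproj_formula[of g q \<Phi> m \<delta>] g_pos g_sym Phi_indep q assms(2) by auto

lemma Ham_diff:
  assumes x: "fst x \<in> U"
    and V_smooth: "smooth_on (U \<times> UNIV) (\<lambda>y. V (fst y) (snd y))"
  shows "Ham g V differentiable (at x)"
proof -
  have bl1: "bounded_linear (\<lambda>y::'n pt. fst (snd y))"
    by (intro bounded_linear_compose[OF bounded_linear_fst bounded_linear_snd])
  have bl2: "bounded_linear (\<lambda>y::'n pt. snd (snd y))"
    by (intro bounded_linear_compose[OF bounded_linear_snd bounded_linear_snd])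
  have fd: "(\<lambda>y::'n pt. fst y) differentiable (at x)" by (rule lin_diff[OF bounded_linear_fst])
  have gd: "(\<lambda>y::'n pt. g (fst y)) differentiable (at x)"
    by (rule differentiable_compose[OF g_diff[OF x] fd])
  have pos0: "\<forall>v. v \<noteq> 0 \<longrightarrow> v \<bullet> (g (fst x) *v v) > 0" using g_pos x by auto
  have Kd: "(\<lambda>y::'n pt. matrix_inv (g (fst y))) differentiable (at x)"
    by (rule diff_minv[OF gd]) (use ginv(3)[OF pos0] in simp)
  have Vd: "(\<lambda>y. V (fst y) (snd y)) differentiable (at (fst x, snd (snd x)))"
    using V_smooth x unfolding smooth_on_def by (metis dd.simps(1) mem_Sigma_iff UNIV_I)
  have pd: "(\<lambda>y::'n pt. (fst y, snd (snd y))) differentiable (at x)"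
    by (intro differentiable_Pair fd lin_diff[OF bl2])
  have V2: "(\<lambda>y::'n pt. V (fst y) (snd (snd y))) differentiable (at x)"
    using differentiable_compose[OF _ pd, of "\<lambda>y. V (fst y) (snd y)"] Vd by simp
  have Q: "(\<lambda>y::'n pt. ip (matrix_inv (g (fst y))) (fst (snd y)) (fst (snd y))) differentiable (at x)"
    by (intro ip_differentiable Kd lin_diff[OF bl1])
  have "Ham g V = (\<lambda>y. (1/2) * ip (matrix_inv (g (fst y))) (fst (snd y)) (fst (snd y)) + V (fst y) (snd (snd y)))"
    by (simp add: Ham_def ip_def fun_eq_iff)
  moreover have "(\<lambda>y::'n pt. (1/2) * ip (matrix_inv (g (fst y))) (fst (snd y)) (fst (snd y)) + V (fst y) (snd (snd y))) differentiable (at x)"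
    by (intro differentiable_add differentiable_mult differentiable_const Q V2)
  ultimately show ?thesis by simp
qed

end




lemma cflat_add: "cflat x (u + v) w = cflat x u w + cflat x v w"
  by (simp add: cflat_def deta_def eta_def inner_add_left algebra_simps)

lemma cflat_diff: "cflat x (u - v) w = cflat x u w - cflat x v w"
  by (simp add: cflat_def deta_def eta_def inner_diff_left algebra_simps)

lemma cflat_p: "cflat x (0, \<delta>, 0) w = - (\<delta> \<bullet> fst w)"
  by (simp add: cflat_def deta_def eta_def)

lemma cflat_ker:
  assumes "\<And>w. cflat x d w = \<beta> \<bullet> fst w"
  shows "d = (0, -\<beta>, 0)"
proof -
  obtain dq dp dz where d: "d = (dq, dp, dz)" by (cases d) auto
  obtain q p z where x: "x = (q, p, z)" by (cases x) auto
  have "cflat x d (0, dq, 0) = \<beta> \<bullet> fst (0::real^'a, dq, 0::real)" by (rule assms)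
  then have "dq \<bullet> dq = 0" by (simp add: cflat_def deta_def eta_def d x)
  then have dq: "dq = 0" by simp
  have "cflat x d (0, 0, 1) = \<beta> \<bullet> fst (0::real^'a, 0::real^'a, 1::real)" by (rule assms)
  then have dz: "dz = 0" by (simp add: cflat_def deta_def eta_def d x dq)
  have "cflat x d (dp + \<beta>, 0, 0) = \<beta> \<bullet> fst (dp + \<beta>, 0::real^'a, 0::real)" by (rule assms)
  then have "(dp + \<beta>) \<bullet> (dp + \<beta>) = 0"
    by (simp add: cflat_def deta_def eta_def d x dq dz inner_add_left inner_add_right inner_commute)
  then have "dp = -\<beta>" by (simp add: add_eq_0_iff)
  then show ?thesis using d dq dz by simp
qed

lemma cflat_surj:
  fixes l :: "'n::finite pt \<Rightarrow> real"
  assumes "linear l"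
  shows "\<exists>v. cflat x v = l"
proof -
  define r where "r = adjoint l 1"
  have lr: "l w = w \<bullet> r" for w
    using adjoint_works[OF assms, of w 1] by (simp add: r_def)
  obtain rq rp rz where r: "r = (rq, rp, rz)" by (cases r) auto
  obtain q p z where x: "x = (q, p, z)" by (cases x) auto
  define v where "v = (rp, -rq - rz *\<^sub>R p, rz + p \<bullet> rp)"
  have "cflat x v w = l w" for w
  proof -
    obtain wq wp wz where w: "w = (wq, wp, wz)" by (cases w) auto
    show ?thesis
      unfolding lr r w x v_def
      by (simp add: cflat_def deta_def eta_def inner_add_left inner_diff_left inner_add_right
          inner_diff_right inner_commute algebra_simps)
  qed
  then show ?thesis by blast
qed

lemma XH_char:
  fixes F :: "'n::finite pt \<Rightarrow> real"
  assumes "F differentiable (at x)"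
  shows "cflat x (XH F x) = (\<lambda>w. frechet_derivative F (at x) w
            - (frechet_derivative F (at x) reeb + F x) * eta x w)"
proof -
  let ?l = "\<lambda>w. frechet_derivative F (at x) w - (frechet_derivative F (at x) reeb + F x) * eta x w"
  have lin: "linear (frechet_derivative F (at x))"
    using assms frechet_derivative_works has_derivative_linear by blast
  interpret L: linear "frechet_derivative F (at x)" by (rule lin)
  have "linear ?l"
    by (rule linearI) (auto simp: L.add L.scale eta_def inner_add_right algebra_simps)
  then obtain v where v: "cflat x v = ?l" using cflat_surj by blast
  have "\<exists>!v. cflat x v = ?l"
  proof (rule ex1I[of _ v])
    show "cflat x v = ?l" by (rule v)
  next
    fix v' assume "cflat x v' = ?l"
    then have "\<And>w. cflat x (v' - v) w = 0 \<bullet> fst w" using v by (simp add: cflat_diff)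
    then have "v' - v = (0, -0, 0)" by (rule cflat_ker)
    then have "v' - v = 0" by (simp add: zero_prod_def)
    then show "v' = v" by simp
  qed
  then show ?thesis unfolding XH_def by (rule theI')
qed




context cset begin

lemma main:
  fixes V :: "real^'n \<Rightarrow> real \<Rightarrow> real" and x :: "'n pt"
  assumes V_smooth: "smooth_on (U \<times> UNIV) (\<lambda>y. V (fst y) (snd y))"
    and x_in: "x \<in> MR U g D"
  shows "frechet_derivative (gam g D) (at x) (XH (Ham g V) x) = XHM U g D (Ham g V) x
       \<and> XHM U g D (Ham g V) x = frechet_derivative (gam g D) (at x) (XH (Ham g V \<circ> gam g D) x)"
proof -
  obtain q p z where x: "x = (q, p, z)" by (cases x) auto
  have qU: "q \<in> U" and pM: "p \<in> Mfib g D q" using x_in x unfolding MR_def by auto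
  have fx: "fst x \<in> U" using qU x by simp
  have pos: "\<forall>v. v \<noteq> 0 \<longrightarrow> v \<bullet> (g q *v v) > 0" using g_pos qU by auto
  let ?H = "Ham g V"
  let ?dH = "frechet_derivative ?H (at x)"
  let ?T = "frechet_derivative (gam g D) (at x)"
  let ?P = "Pproj g D q"
  have Hd: "(?H has_derivative ?dH) (at x)"
    using Ham_diff[OF fx V_smooth] frechet_derivative_works by blast
  have Gd: "(gam g D has_derivative ?T) (at x)"
    using gam_diff[OF fx] frechet_derivative_works by blast
  have gx: "gam g D x = x" by (rule gam_id[OF x_in])
  interpret T: linear ?T using Gd has_derivative_linear by blast
  interpret dH: linear ?dH using Hd has_derivative_linear by blast
  have Gd': "(gam g D has_derivative ?T) (at (gam g D x))" using Gd gx by simp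
  have T1: "fst (?T u) = fst u" for u
  proof -
    have "((\<lambda>y. fst (gam g D y)) has_derivative (\<lambda>u. fst (?T u))) (at x)"
      using has_derivative_fst[OF Gd] .
    moreover have "(\<lambda>y. fst (gam g D y)) = (\<lambda>y::'n pt. fst y)" by (simp add: gam_def fun_eq_iff)
    moreover have "((\<lambda>y::'n pt. fst y) has_derivative (\<lambda>u. fst u)) (at x)"
      by (rule bounded_linear_imp_has_derivative[OF bounded_linear_fst])
    ultimately have "(\<lambda>u. fst (?T u)) = (\<lambda>u. fst u)" using has_derivative_unique by metis
    then show ?thesis by metis
  qed
  have T3: "snd (snd (?T u)) = snd (snd u)" for u
  proof -
    have "((\<lambda>y. snd (snd (gam g D y))) has_derivative (\<lambda>u. snd (snd (?T u)))) (at x)"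
      using has_derivative_snd[OF has_derivative_snd[OF Gd]] .
    moreover have "(\<lambda>y. snd (snd (gam g D y))) = (\<lambda>y::'n pt. snd (snd y))" by (simp add: gam_def fun_eq_iff)
    moreover have "((\<lambda>y::'n pt. snd (snd y)) has_derivative (\<lambda>u. snd (snd u))) (at x)"
      by (rule bounded_linear_imp_has_derivative)
         (intro bounded_linear_compose[OF bounded_linear_snd bounded_linear_snd])
    ultimately have "(\<lambda>u. snd (snd (?T u))) = (\<lambda>u. snd (snd u))" using has_derivative_unique by metis
    then show ?thesis by metis
  qed
  have T2: "?T (0, w, 0) = (0, ?P w, 0)" for w
  proof (rule line_deriv[OF Gd])
    have "(\<lambda>t. gam g D (x + t *\<^sub>R (0, w, 0))) = (\<lambda>t. x + t *\<^sub>R (0, ?P w, 0))"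
      using P_affine[OF qU pM] by (simp add: x gam_def fun_eq_iff)
    moreover have "((\<lambda>t. x + t *\<^sub>R (0, ?P w, 0)) has_derivative (\<lambda>t. t *\<^sub>R (0, ?P w, 0))) (at 0)"
      by (auto intro!: derivative_eq_intros)
    ultimately show "((\<lambda>t. gam g D (x + t *\<^sub>R (0, w, 0))) has_derivative (\<lambda>t. t *\<^sub>R (0, ?P w, 0))) (at 0)"
      by simp
  qed
  have Tidem: "?T (?T u) = ?T u" for u
  proof -
    have "((\<lambda>y. gam g D (gam g D y)) has_derivative (\<lambda>u. ?T (?T u))) (at x)"
      using has_derivative_compose[OF Gd Gd'] .
    moreover have "{y::'n pt. fst y \<in> U} = U \<times> UNIV" by auto
    then have "open {y::'n pt. fst y \<in> U}" using open_Times[OF U_open open_UNIV] by simp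
    ultimately have "(gam g D has_derivative (\<lambda>u. ?T (?T u))) (at x)"
      by (rule has_derivative_transform_within_open) (use fx gam_MR gam_id in auto)
    then have "(\<lambda>u. ?T (?T u)) = ?T" using Gd has_derivative_unique by blast
    then show ?thesis by metis
  qed
  define \<delta> where "\<delta> u = fst (snd (?T u)) - fst (snd u)" for u
  have Tdec: "?T u = u + (0, \<delta> u, 0)" for u
    using T1[of u] T3[of u] by (cases "?T u", cases u) (simp add: \<delta>_def)
  have \<delta>D: "\<delta> u \<in> Dann D q" for u
  proof -
    have "?T (?T u) = ?T u + (0, ?P (\<delta> u), 0)"
      by (subst (2) Tdec) (simp add: T.add T2)
    then have "?P (\<delta> u) = 0" using Tidem[of u] by (simp add: prod_eq_iff)
    then show ?thesis by (rule P_zero_Dann[OF qU])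
  qed
  have dH0: "?dH (0, d, 0) = 0" if dD: "d \<in> Dann D q" for d
  proof (rule line_deriv[OF Hd, where e = 0, simplified])
    let ?K = "matrix_inv (g q)"
    obtain u where u: "u \<in> D q" "p = g q *v u" using pM unfolding Mfib_def by auto
    have Ku: "?K *v p = u" using ginv(2)[OF pos] u(2) by (simp add: matrix_vector_mul_assoc)
    have Ks: "transpose ?K = ?K" using Ksym[OF pos] g_sym qU by auto
    have a1: "d \<bullet> (?K *v p) = 0" using dD u(1) Ku unfolding Dann_def by auto
    have a2: "p \<bullet> (?K *v d) = 0" using a1 ip_sym[OF Ks, of p d] by (simp add: ip_def)
    have "(\<lambda>t. ?H (x + t *\<^sub>R (0, d, 0))) = (\<lambda>t. ?H x + t^2 * ((1/2) * (d \<bullet> (?K *v d))))"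
      by (simp add: fun_eq_iff x Ham_def matrix_vector_right_distrib inner_add_left inner_add_right
          matrix_vector_mult_scaleR a1 a2 power2_eq_square algebra_simps)
    moreover have "((\<lambda>t::real. ?H x + t^2 * ((1/2) * (d \<bullet> (?K *v d)))) has_derivative (\<lambda>t. 0)) (at 0)"
      by (auto intro!: derivative_eq_intros)
    ultimately show "((\<lambda>t. ?H (x + t *\<^sub>R (0, d, 0))) has_derivative (\<lambda>t. 0)) (at 0)" by simp
  qed
  have dHT: "?dH (?T w) = ?dH w" for w
    using Tdec[of w] dH0[OF \<delta>D[of w]] by (simp add: dH.add)
  let ?l = "\<lambda>w. ?dH w - (?dH reeb + ?H x) * eta x w"
  define a where "a = XH ?H x"
  have ca: "cflat x a = ?l" unfolding a_def by (rule XH_char[OF Ham_diff[OF fx V_smooth]])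
  define v0 where "v0 = ?T a"
  have v0dec: "v0 = a + (0, \<delta> a, 0)" by (simp add: v0_def Tdec)
  have Tv0: "?T v0 = v0" by (simp add: v0_def Tidem)
  have cv0: "cflat x v0 w - ?dH w + (?H x + ?dH reeb) * eta x w = (- \<delta> a) \<bullet> fst w" for w
  proof -
    have "cflat x a w = ?l w" using ca by (rule fun_cong)
    then show ?thesis by (simp add: v0dec cflat_add cflat_p algebra_simps)
  qed
  have v0T: "v0 \<in> tspace (MR U g D) x"
  proof -
    obtain r where r: "r > 0" "ball q r \<subseteq> U" using U_open qU open_contains_ball by blast
    define e where "e = r / (norm (fst a) + 1)"
    have np: "norm (fst a) + 1 > 0" using norm_ge_zero[of "fst a"] by linarith
    have e: "e > 0" using r np by (simp add: e_def)
    have inMR: "gam g D (x + t *\<^sub>R a) \<in> MR U g D" if "\<bar>t\<bar> < e" for t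
    proof (rule gam_MR)
      have "norm (t *\<^sub>R fst a) = \<bar>t\<bar> * norm (fst a)" by simp
      also have "\<dots> \<le> \<bar>t\<bar> * (norm (fst a) + 1)" by (simp add: mult_left_mono)
      also have "\<dots> < e * (norm (fst a) + 1)"
        using that np by (intro mult_strict_right_mono) auto
      also have "\<dots> = r" using np by (simp add: e_def)
      finally have "dist q (q + t *\<^sub>R fst a) < r" by (simp add: dist_norm)
      then show "fst (x + t *\<^sub>R a) \<in> U" using r(2) by (auto simp: x)
    qed
    have ln: "((\<lambda>t::real. x + t *\<^sub>R a) has_derivative (\<lambda>t. t *\<^sub>R a)) (at 0)"
      by (auto intro!: derivative_eq_intros)
    have Gd0: "(gam g D has_derivative ?T) (at (x + (0::real) *\<^sub>R a))" using Gd by simp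
    have "((\<lambda>t. gam g D (x + t *\<^sub>R a)) has_derivative (\<lambda>t. ?T (t *\<^sub>R a))) (at 0)"
      using has_derivative_compose[OF ln Gd0] .
    then have "((\<lambda>t. gam g D (x + t *\<^sub>R a)) has_vector_derivative v0) (at 0)"
      unfolding has_vector_derivative_def v0_def by (simp add: T.scale)
    moreover have "gam g D (x + 0 *\<^sub>R a) = x" using gx by simp
    ultimately show ?thesis unfolding tspace_def
      by (intro CollectI exI[of _ "\<lambda>t. gam g D (x + t *\<^sub>R a)"] exI[of _ e] conjI allI impI e inMR)
  qed
  have v0alpha: "\<exists>\<alpha>\<in>Dann D (fst x). (\<lambda>w. cflat x v0 w - ?dH w + (?H x + ?dH reeb) * eta x w) = (\<lambda>w. \<alpha> \<bullet> fst w)"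
  proof (rule bexI[of _ "- \<delta> a"])
    show "(\<lambda>w. cflat x v0 w - ?dH w + (?H x + ?dH reeb) * eta x w) = (\<lambda>w. (- \<delta> a) \<bullet> fst w)"
      using cv0 by (simp only: fun_eq_iff) blast
    show "- \<delta> a \<in> Dann D (fst x)"
      using \<delta>D[of a] subspace_neg[OF subspace_Dann] x by auto
  qed
  have uniq: "v = v0" if vT: "v \<in> tspace (MR U g D) x"
    and va: "\<exists>\<alpha>\<in>Dann D (fst x). (\<lambda>w. cflat x v w - ?dH w + (?H x + ?dH reeb) * eta x w) = (\<lambda>w. \<alpha> \<bullet> fst w)" for v
  proof -
    obtain c e where ce: "e > 0" "c 0 = x" "\<And>t. \<bar>t\<bar> < e \<Longrightarrow> c t \<in> MR U g D"
        "(c has_vector_derivative v) (at 0)"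
      using vT unfolding tspace_def by blast
    obtain \<alpha> where \<alpha>: "\<alpha> \<in> Dann D q" "\<And>w. cflat x v w - ?dH w + (?H x + ?dH reeb) * eta x w = \<alpha> \<bullet> fst w"
      using va by (auto simp: x fun_eq_iff)
    have Tv: "?T v = v"
    proof -
      have cd: "(c has_derivative (\<lambda>t. t *\<^sub>R v)) (at 0)" using ce(4) unfolding has_vector_derivative_def .
      have Gc: "(gam g D has_derivative ?T) (at (c 0))" using Gd ce(2) by simp
      have der: "((\<lambda>t. gam g D (c t)) has_derivative (\<lambda>t. ?T (t *\<^sub>R v))) (at 0)"
        using has_derivative_compose[OF cd Gc] .
      have eqc: "\<And>t. t \<in> ball 0 e \<Longrightarrow> gam g D (c t) = c t"
        using ce(3) gam_id by (auto simp: dist_norm)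
      have "(c has_derivative (\<lambda>t. ?T (t *\<^sub>R v))) (at 0)"
        by (rule has_derivative_transform_within_open[OF der open_ball centre_in_ball[THEN iffD2, OF ce(1)] eqc])
      then have "(\<lambda>t. ?T (t *\<^sub>R v)) = (\<lambda>t. t *\<^sub>R v)" using cd has_derivative_unique by blast
      from fun_cong[OF this, of 1] show ?thesis by simp
    qed
    define dd where "dd = v - v0"
    have "cflat x dd w = (\<alpha> + \<delta> a) \<bullet> fst w" for w
      using \<alpha>(2)[of w] cv0[of w] by (simp add: dd_def cflat_diff inner_add_left algebra_simps)
    then have ddf: "dd = (0, -(\<alpha> + \<delta> a), 0)" by (rule cflat_ker)
    have "-(\<alpha> + \<delta> a) \<in> Dann D q"
      using \<alpha>(1) \<delta>D[of a] subspace_Dann by (metis subspace_add subspace_neg)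
    then have "?T dd = 0" using ddf T2 P_Dann[OF qU] by (simp add: zero_prod_def)
    moreover have "?T dd = dd" using Tv Tv0 by (simp add: dd_def T.diff)
    ultimately show "v = v0" by (simp add: dd_def)
  qed
  have XHM_eq: "XHM U g D ?H x = v0"
    unfolding XHM_def
  proof (rule the_equality)
    show "v0 \<in> tspace (MR U g D) x \<and> (\<exists>\<alpha>\<in>Dann D (fst x). (\<lambda>w. cflat x v0 w - ?dH w + (?H x + ?dH reeb) * eta x w) = (\<lambda>w. \<alpha> \<bullet> fst w))"
      using v0T v0alpha by (rule conjI)
  next
    fix v assume "v \<in> tspace (MR U g D) x \<and> (\<exists>\<alpha>\<in>Dann D (fst x). (\<lambda>w. cflat x v w - ?dH w + (?H x + ?dH reeb) * eta x w) = (\<lambda>w. \<alpha> \<bullet> fst w))"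
    then show "v = v0" using uniq by blast
  qed
  have HG: "((?H \<circ> gam g D) has_derivative (\<lambda>w. ?dH (?T w))) (at x)"
  proof -
    have Hd': "(?H has_derivative ?dH) (at (gam g D x))" using Hd gx by simp
    show ?thesis using has_derivative_compose[OF Gd Hd'] by (simp add: o_def)
  qed
  have fHG: "frechet_derivative (?H \<circ> gam g D) (at x) = (\<lambda>w. ?dH (?T w))"
    using frechet_derivative_at[OF HG] by simp
  have "XH (?H \<circ> gam g D) x = a"
    unfolding XH_def a_def fHG by (simp add: dHT gx)
  then show ?thesis using XHM_eq v0_def a_def by simp
qed

end


theorem mainTheorem2:
  fixes U :: "(real^'n) set"
    and g :: "real^'n \<Rightarrow> real^'n^'n"
    and V :: "real^'n \<Rightarrow> real \<Rightarrow> real"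
    and \<Phi> :: "nat \<Rightarrow> real^'n \<Rightarrow> real^'n"
    and m :: nat
    and x :: "'n pt"
  assumes U_open: "open U"
    and g_smooth: "smooth_on U g"
    and g_sym: "\<forall>q\<in>U. transpose (g q) = g q"
    and g_pos: "\<forall>q\<in>U. \<forall>v. v \<noteq> 0 \<longrightarrow> v \<bullet> (g q *v v) > 0"
    and V_smooth: "smooth_on (U \<times> UNIV) (\<lambda>y. V (fst y) (snd y))"
    and Phi_smooth: "\<forall>a<m. smooth_on U (\<Phi> a)"
    and Phi_indep: "\<forall>q\<in>U. independent ((\<lambda>a. \<Phi> a q) ` {..<m}) \<and> inj_on (\<lambda>a. \<Phi> a q) {..<m}"
    and x_in: "x \<in> MR U g (Dist \<Phi> m)"
  shows "frechet_derivative (gam g (Dist \<Phi> m)) (at x) (XH (Ham g V) x)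
           = XHM U g (Dist \<Phi> m) (Ham g V) x
       \<and> XHM U g (Dist \<Phi> m) (Ham g V) x
           = frechet_derivative (gam g (Dist \<Phi> m)) (at x)
               (XH (Ham g V \<circ> gam g (Dist \<Phi> m)) x)"
  proof -
  interpret cset U g \<Phi> m
    by (unfold_locales) (use U_open g_smooth g_sym g_pos Phi_smooth Phi_indep in auto)
  show ?thesis by (rule main[OF V_smooth x_in])
qed

end
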